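(* Let $S\subset\mathbb{N}$ be a WM set. Then $S$ is 1-recurrent: for every $E\subset\mathbb{N}$ with positive upper Banach density there exists $s\in S$ with $E\cap(E-s)\neq\emptyset$. In particular $S$ is a Poincaré set: for every probability measure preserving system $(X,\Sigma,\mu,T)$ and every $A\in\Sigma$ with $\mu(A)>0$ there exists $s\in S$ with $\mu(A\cap T^{-s}A)>0$.
   Context: $\mathbb{N}=\{1,2,\dots\}$. Upper Banach density: $d^*(E)=\limsup_{b_n-a_n\to\infty}\frac{|E\cap\{a_n,\dots,b_n\}|}{b_n-a_n+1}$. $\Omega=\{0,1\}^{\mathbb{N}}$ with product topology and left shift $T$; $X_{1_S}$ is the closure of $\{T^n1_S:n\ge0\}$. A point $\xi$ is generic for $(X,\mu,T)$ if $\frac1N\sum_{n=0}^{N-1}f(T^n\xi)\to\int f\,d\mu$ for all continuous $f$. $d(S)=\lim_N\frac1N|S\cap\{1,\dots,N\}|$. $S$ is a WM set if for some $T$-invariant Borel probability $\mu$ on $X_{1_S}$, $1_S$ is generic for $(X_{1_S},\mu,T)$, this system is weakly mixing, and $d(S)>0$. *)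

theory Defs
  imports "HOL-Probability.Probability"
begin

(* Points of Omega = {0,1}^N (N = {1,2,...}) are encoded as  nat => bool  with
   index k standing for the position k+1; the topology on  nat => bool  is the
   product topology (bool carries the discrete topology). *)

definition shift :: "(nat \<Rightarrow> bool) \<Rightarrow> (nat \<Rightarrow> bool)" where
  "shift \<omega> = (\<lambda>k. \<omega> (Suc k))"

definition indic_pt :: "nat set \<Rightarrow> (nat \<Rightarrow> bool)" where
  "indic_pt S = (\<lambda>k. Suc k \<in> S)"

definition orbit_closure :: "(nat \<Rightarrow> bool) \<Rightarrow> (nat \<Rightarrow> bool) set" where
  "orbit_closure \<xi> = closure {(shift ^^ n) \<xi> | n. True}"

definition generic_point ::
    "(nat \<Rightarrow> bool) set \<Rightarrow> (nat \<Rightarrow> bool) measure \<Rightarrow> (nat \<Rightarrow> bool) \<Rightarrow> bool" where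
  "generic_point X \<mu> \<xi> \<longleftrightarrow>
     (\<forall>f :: (nat \<Rightarrow> bool) \<Rightarrow> real. continuous_on X f \<longrightarrow>
        (\<lambda>N. (\<Sum>n<N. f ((shift ^^ n) \<xi>)) / real N) \<longlonglongrightarrow> (LINT x:X|\<mu>. f x))"

definition invariant_borel_prob ::
    "(nat \<Rightarrow> bool) set \<Rightarrow> (nat \<Rightarrow> bool) measure \<Rightarrow> bool" where
  "invariant_borel_prob X \<mu> \<longleftrightarrow>
     prob_space \<mu> \<and> sets \<mu> = sets borel \<and> emeasure \<mu> X = 1 \<and>
     shift \<in> measurable \<mu> \<mu> \<and> distr \<mu> \<mu> shift = \<mu>"

definition weakly_mixing :: "'a measure \<Rightarrow> ('a \<Rightarrow> 'a) \<Rightarrow> bool" where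
  "weakly_mixing M T \<longleftrightarrow>
     (\<forall>A\<in>sets M. \<forall>B\<in>sets M.
        (\<lambda>N. (\<Sum>n<N. \<bar>measure M (A \<inter> ((T ^^ n) -` B \<inter> space M)) - measure M A * measure M B\<bar>)
              / real N) \<longlonglongrightarrow> 0)"

definition has_density :: "nat set \<Rightarrow> real \<Rightarrow> bool" where
  "has_density S d \<longleftrightarrow> (\<lambda>N. real (card (S \<inter> {1..N})) / real N) \<longlonglongrightarrow> d"

definition WM_set :: "nat set \<Rightarrow> bool" where
  "WM_set S \<longleftrightarrow> S \<subseteq> {1..} \<and>
     (\<exists>\<mu>. invariant_borel_prob (orbit_closure (indic_pt S)) \<mu> \<and>
          generic_point (orbit_closure (indic_pt S)) \<mu> (indic_pt S) \<and>
          weakly_mixing \<mu> shift) \<and>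
     (\<exists>d>0. has_density S d)"

definition upper_banach_density :: "nat set \<Rightarrow> ereal" where
  "upper_banach_density E =
     Sup {limsup (\<lambda>n. ereal (real (card (E \<inter> {a n..b n})) / real (b n - a n + 1))) |
          a b :: nat \<Rightarrow> nat.
            (\<forall>n. a n \<le> b n) \<and> filterlim (\<lambda>n. b n - a n) at_top sequentially}"

end

theory Submission
  imports Defs "HOL-Library.Diagonal_Subsequence"
begin


definition nd :: "nat \<Rightarrow> nat \<Rightarrow> nat" where
  "nd m n = (if m \<le> n then n - m else m - n)"

definition QF :: "(nat \<Rightarrow> real) \<Rightarrow> nat \<Rightarrow> (nat \<Rightarrow> real) \<Rightarrow> (nat \<Rightarrow> real) \<Rightarrow> real" where
  "QF c N x y = (\<Sum>p<N. \<Sum>q<N. x p * y q * c (nd p q))"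

lemma nd_sym: "nd m n = nd n m"
  by (auto simp: nd_def)

lemma QF_sym: "QF c N x y = QF c N y x"
  unfolding QF_def by (subst sum.swap) (simp add: nd_sym mult_ac)

lemma QF_add_left: "QF c N (\<lambda>p. x p + y p) z = QF c N x z + QF c N y z"
  unfolding QF_def by (simp add: distrib_right sum.distrib)

lemma QF_scale_left: "QF c N (\<lambda>p. t * x p) z = t * QF c N x z"
  unfolding QF_def by (simp add: sum_distrib_left mult_ac)

lemma QF_add_right: "QF c N z (\<lambda>p. x p + y p) = QF c N z x + QF c N z y"
  by (metis QF_sym QF_add_left)

lemma QF_scale_right: "QF c N z (\<lambda>p. t * x p) = t * QF c N z x"
  by (metis QF_sym QF_scale_left)

lemma QF_sum_left: "QF c N (\<lambda>p. \<Sum>j\<in>J. w j p) z = (\<Sum>j\<in>J. QF c N (w j) z)"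
  unfolding QF_def by (simp add: sum_distrib_right sum.swap[of _ J])

lemma QF_sum_right: "QF c N z (\<lambda>p. \<Sum>j\<in>J. w j p) = (\<Sum>j\<in>J. QF c N z (w j))"
  by (simp add: QF_sym[of c N z] QF_sum_left)

lemma QF_cs:
  assumes psd: "\<And>x. 0 \<le> QF c N x x"
  shows "2 * \<bar>QF c N x y\<bar> \<le> QF c N x x + QF c N y y"
proof -
  have a: "0 \<le> QF c N (\<lambda>p. x p + y p) (\<lambda>p. x p + y p)" by (rule psd)
  have b: "0 \<le> QF c N (\<lambda>p. x p + (-1) * y p) (\<lambda>p. x p + (-1) * y p)" by (rule psd)
  have a': "QF c N (\<lambda>p. x p + y p) (\<lambda>p. x p + y p) = QF c N x x + 2 * QF c N x y + QF c N y y"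
    by (simp add: QF_add_left QF_add_right QF_sym[of c N y x])
  have b': "QF c N (\<lambda>p. x p + (-1) * y p) (\<lambda>p. x p + (-1) * y p) = QF c N x x - 2 * QF c N x y + QF c N y y"
    unfolding QF_add_left QF_add_right QF_scale_left QF_scale_right QF_sym[of c N y x] by simp
  show ?thesis using a b a' b' by (simp add: abs_if)
qed

lemma QF_sum_le:
  assumes psd: "\<And>x. 0 \<le> QF c N x x" and fin: "finite J"
  shows "QF c N (\<lambda>p. \<Sum>j\<in>J. w j p) (\<lambda>p. \<Sum>j\<in>J. w j p) \<le> real (card J) * (\<Sum>j\<in>J. QF c N (w j) (w j))"
proof -
  have e: "QF c N (\<lambda>p. \<Sum>j\<in>J. w j p) (\<lambda>p. \<Sum>j\<in>J. w j p) = (\<Sum>j\<in>J. \<Sum>j'\<in>J. QF c N (w j) (w j'))"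
    by (simp add: QF_sum_left QF_sum_right)
  have "2 * (\<Sum>j\<in>J. \<Sum>j'\<in>J. QF c N (w j) (w j')) = (\<Sum>j\<in>J. \<Sum>j'\<in>J. 2 * QF c N (w j) (w j'))"
    by (simp add: sum_distrib_left)
  also have "\<dots> \<le> (\<Sum>j\<in>J. \<Sum>j'\<in>J. (QF c N (w j) (w j) + QF c N (w j') (w j')))"
    apply (rule sum_mono, rule sum_mono)
    subgoal for j j' using QF_cs[OF psd, of "w j" "w j'"] abs_ge_self[of "QF c N (w j) (w j')"] by linarith
    done
  also have "\<dots> = 2 * (real (card J) * (\<Sum>j\<in>J. QF c N (w j) (w j)))"
    by (simp add: sum.distrib sum_distrib_left sum.swap[of _ J J] )
  finally show ?thesis using e by linarith
qed

lemma sum_rev_Suc: "(\<Sum>p<N. c (nd p N)) = (\<Sum>n<N. c (Suc n))"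
proof -
  have "(\<Sum>p<N. c (nd p N)) = (\<Sum>p<N. (\<lambda>i. c (Suc i)) (N - Suc p))"
    by (rule sum.cong) (auto simp: nd_def Suc_diff_Suc)
  also have "\<dots> = (\<Sum>n<N. c (Suc n))" by (rule sum.nat_diff_reindex)
  finally show ?thesis .
qed

lemma F_rec: "QF c (Suc N) (\<lambda>_. 1) (\<lambda>_. 1) = QF c N (\<lambda>_. 1) (\<lambda>_. 1) + 2 * (\<Sum>n<N. c (Suc n)) + c 0"
proof -
  have "QF c (Suc N) (\<lambda>_. 1) (\<lambda>_. 1) = QF c N (\<lambda>_. 1) (\<lambda>_. 1) + (\<Sum>p<N. c (nd p N)) + (\<Sum>q<N. c (nd N q)) + c (nd N N)"
    unfolding QF_def by (simp add: sum.distrib)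
  moreover have "(\<Sum>q<N. c (nd N q)) = (\<Sum>p<N. c (nd p N))" by (simp add: nd_sym)
  moreover have "(\<Sum>p<N. c (nd p N)) = (\<Sum>n<N. c (Suc n))" by (rule sum_rev_Suc)
  moreover have "c (nd N N) = c 0" by (simp add: nd_def)
  ultimately show ?thesis by linarith
qed

lemma F_closed: "QF c N (\<lambda>_. 1) (\<lambda>_. 1) = real N * c 0 + 2 * (\<Sum>L<N. \<Sum>n<L. c (Suc n))"
proof (induction N)
  case 0 show ?case by (simp add: QF_def)
next
  case (Suc N) show ?case by (simp add: F_rec Suc.IH algebra_simps)
qed

lemma fej_inf:
  fixes c :: "nat \<Rightarrow> real"
  assumes cb: "\<And>k. \<bar>c k\<bar> \<le> 1" and dp: "\<delta> > 0"
    and fej: "\<And>N. \<delta> * real N ^ 2 \<le> QF c N (\<lambda>_. 1) (\<lambda>_. 1)"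
  shows "\<exists>L\<ge>L0. (\<Sum>n<L. c (Suc n)) > \<delta> / 4 * real L"
proof (rule ccontr)
  assume "\<not> ?thesis"
  hence h: "\<And>L. L \<ge> L0 \<Longrightarrow> (\<Sum>n<L. c (Suc n)) \<le> \<delta> / 4 * real L" by force
  have D: "(\<Sum>n<L. c (Suc n)) \<le> \<delta> / 4 * real L + real L0" for L
  proof (cases "L \<ge> L0")
    case True thus ?thesis using h[OF True] by simp
  next
    case False
    have "(\<Sum>n<L. c (Suc n)) \<le> (\<Sum>n<L. 1)" by (rule sum_mono) (use cb in \<open>simp add: abs_le_iff\<close>)
    also have "\<dots> = real L" by simp
    finally have "(\<Sum>n<L. c (Suc n)) \<le> real L" .
    moreover have "real L \<le> real L0" using False by simp
    moreover have "0 \<le> \<delta> / 4 * real L" using dp by simp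
    ultimately show ?thesis by linarith
  qed
  define N where "N = nat \<lceil>(1 + 2 * real L0) * 2 / \<delta>\<rceil> + 1"
  have Npos: "real N > 0" unfolding N_def by simp
  have "\<delta> * real N ^ 2 \<le> real N * c 0 + 2 * (\<Sum>L<N. \<Sum>n<L. c (Suc n))"
    using fej[of N] by (simp add: F_closed)
  also have "\<dots> \<le> real N * 1 + 2 * (\<Sum>L<N. \<delta> / 4 * real N + real L0)"
  proof -
    have "real N * c 0 \<le> real N * 1" using cb[of 0] by (intro mult_left_mono) (auto simp: abs_le_iff)
    moreover have "(\<Sum>L<N. \<Sum>n<L. c (Suc n)) \<le> (\<Sum>L<N. \<delta> / 4 * real N + real L0)"
    proof (rule sum_mono)
      fix L assume "L \<in> {..<N}"
      hence "\<delta> / 4 * real L \<le> \<delta> / 4 * real N" using dp by (intro mult_left_mono) auto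
      thus "(\<Sum>n<L. c (Suc n)) \<le> \<delta> / 4 * real N + real L0" using D[of L] by linarith
    qed
    ultimately show ?thesis by linarith
  qed
  also have "\<dots> = real N * (1 + \<delta> / 2 * real N + 2 * real L0)" by (simp add: algebra_simps)
  finally have "\<delta> * real N ^ 2 \<le> real N * (1 + \<delta> / 2 * real N + 2 * real L0)" .
  hence "\<delta> * real N \<le> 1 + \<delta> / 2 * real N + 2 * real L0"
    using Npos by (simp add: power2_eq_square mult.assoc)
  hence "\<delta> / 2 * real N \<le> 1 + 2 * real L0" by simp
  moreover have "(1 + 2 * real L0) * 2 / \<delta> < real N" unfolding N_def
    by (smt (verit) of_nat_1 of_nat_add real_nat_ceiling_ge)
  hence "(1 + 2 * real L0) < \<delta> / 2 * real N" using dp by (simp add: field_simps)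
  ultimately show False by linarith
qed

lemma QF_cong: "(\<And>p. p < N \<Longrightarrow> x p = x' p) \<Longrightarrow> (\<And>p. p < N \<Longrightarrow> y p = y' p) \<Longrightarrow> QF c N x y = QF c N x' y'"
  unfolding QF_def by (intro sum.cong) auto

definition Rk :: "(nat \<Rightarrow> real) \<Rightarrow> nat \<Rightarrow> nat \<Rightarrow> real" where
  "Rk b L k = (\<Sum>p<L. \<Sum>q<L. if nd p q = k then b p * b q else 0)"

lemma vdc_w_sum:
  assumes "p < L" "H > 0"
  shows "(\<Sum>j<L+H. (if p \<le> j \<and> j < p + H then b p / real H else 0)) = b p"
proof -
  have "(\<Sum>j<L+H. (if p \<le> j \<and> j < p + H then b p / real H else 0)) = (\<Sum>j\<in>{..<L+H} \<inter> {p..<p+H}. b p / real H)"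
    by (subst sum.inter_restrict) (auto intro!: sum.cong)
  also have "{..<L+H} \<inter> {p..<p+H} = {p..<p+H}" using assms by auto
  finally show ?thesis using assms by simp
qed

lemma vdc_card:
  assumes "p < L" "q < L"
  shows "(\<Sum>j<L+H. (if p \<le> j \<and> j < p + H then x else 0) * (if q \<le> j \<and> j < q + H then y else 0))
     = x * y * real (H - nd p q)"
proof -
  have "(\<Sum>j<L+H. (if p \<le> j \<and> j < p + H then x else 0) * (if q \<le> j \<and> j < q + H then y else 0))
      = (\<Sum>j<L+H. if j \<in> {max p q..<min p q + H} then x * y else 0)"
    by (intro sum.cong) auto
  also have "\<dots> = (\<Sum>j\<in>{..<L+H} \<inter> {max p q..<min p q + H}. x * y)"
    by (rule sum.inter_restrict[symmetric]) simp
  also have "{..<L+H} \<inter> {max p q..<min p q + H} = {max p q..<min p q + H}" using assms by auto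
  finally have e: "(\<Sum>j<L+H. (if p \<le> j \<and> j < p + H then x else 0) * (if q \<le> j \<and> j < q + H then y else 0)) = real (card {max p q..<min p q + H}) * (x * y)" by simp
  have "card {max p q..<min p q + H} = H - nd p q" by (auto simp: nd_def)
  with e show ?thesis by simp
qed

lemma Rk_expand:
  "(\<Sum>p<L. \<Sum>q<L. g (nd p q) * (b p * b q)) = (\<Sum>k<L+H. g k * Rk b L k)"
proof -
  have "(\<Sum>p<L. \<Sum>q<L. g (nd p q) * (b p * b q)) = (\<Sum>p<L. \<Sum>q<L. \<Sum>k<L+H. if nd p q = k then g k * (b p * b q) else 0)"
  proof (intro sum.cong refl)
    fix p q assume "p \<in> {..<L}" "q \<in> {..<L}"
    hence "nd p q \<in> {..<L+H}" by (auto simp: nd_def)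
    thus "g (nd p q) * (b p * b q) = (\<Sum>k<L+H. if nd p q = k then g k * (b p * b q) else 0)"
      by (simp add: sum.delta')
  qed
  also have "\<dots> = (\<Sum>p<L. \<Sum>k<L+H. \<Sum>q<L. if nd p q = k then g k * (b p * b q) else 0)"
    by (intro sum.cong refl sum.swap)
  also have "\<dots> = (\<Sum>k<L+H. \<Sum>p<L. \<Sum>q<L. if nd p q = k then g k * (b p * b q) else 0)"
    by (rule sum.swap)
  also have "\<dots> = (\<Sum>k<L+H. g k * Rk b L k)"
    unfolding Rk_def by (intro sum.cong refl) (simp add: sum_distrib_left if_distrib cong: if_cong)
  finally show ?thesis .
qed

lemma vdc:
  assumes psd: "\<And>x. 0 \<le> QF c L x x" and cb: "\<And>k. \<bar>c k\<bar> \<le> 1" and H: "H > 0"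
  shows "QF c L b b \<le> real (L+H) / real H * (\<Sum>k<H. \<bar>Rk b L k\<bar>)"
proof -
  define w where "w j p = (if p \<le> j \<and> j < p + H then b p / real H else 0)" for j p
  have "QF c L b b = QF c L (\<lambda>p. \<Sum>j\<in>{..<L+H}. w j p) (\<lambda>p. \<Sum>j\<in>{..<L+H}. w j p)"
    by (rule QF_cong) (simp_all add: w_def vdc_w_sum H)
  also have "\<dots> \<le> real (L+H) * (\<Sum>j<L+H. QF c L (w j) (w j))"
    using QF_sum_le[OF psd, of "{..<L+H}" w] by simp
  finally have 1: "QF c L b b \<le> real (L+H) * (\<Sum>j<L+H. QF c L (w j) (w j))" .
  have "(\<Sum>j<L+H. QF c L (w j) (w j)) = (\<Sum>j<L+H. \<Sum>p<L. \<Sum>q<L. w j p * w j q * c (nd p q))"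
    unfolding QF_def ..
  also have "\<dots> = (\<Sum>p<L. \<Sum>j<L+H. \<Sum>q<L. w j p * w j q * c (nd p q))"
    by (rule sum.swap)
  also have "\<dots> = (\<Sum>p<L. \<Sum>q<L. \<Sum>j<L+H. w j p * w j q * c (nd p q))"
    by (intro sum.cong refl sum.swap)
  also have "\<dots> = (\<Sum>p<L. \<Sum>q<L. (c (nd p q) * real (H - nd p q) / real H ^ 2) * (b p * b q))"
  proof (intro sum.cong refl)
    fix p q assume "p \<in> {..<L}" "q \<in> {..<L}"
    hence "(\<Sum>j<L+H. w j p * w j q) = b p / real H * (b q / real H) * real (H - nd p q)"
      unfolding w_def using vdc_card[of p L q H "b p / real H" "b q / real H"] by simp
    thus "(\<Sum>j<L+H. w j p * w j q * c (nd p q)) = (c (nd p q) * real (H - nd p q) / real H ^ 2) * (b p * b q)"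
    proof -
      have "(\<Sum>j<L+H. w j p * w j q * c (nd p q)) = (\<Sum>j<L+H. w j p * w j q) * c (nd p q)"
        by (simp add: sum_distrib_right)
      thus ?thesis using \<open>(\<Sum>j<L+H. w j p * w j q) = _\<close> by (simp add: power2_eq_square field_simps)
    qed
  qed
  also have "\<dots> = (\<Sum>k<L+H. (c k * real (H - k) / real H ^ 2) * Rk b L k)"
    by (rule Rk_expand)
  finally have 2: "(\<Sum>j<L+H. QF c L (w j) (w j)) = (\<Sum>k<L+H. (c k * real (H - k) / real H ^ 2) * Rk b L k)" .
  have "(\<Sum>k<L+H. (c k * real (H - k) / real H ^ 2) * Rk b L k) \<le> (\<Sum>k<L+H. \<bar>(c k * real (H - k) / real H ^ 2) * Rk b L k\<bar>)"
    by (rule sum_mono) (rule abs_ge_self)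
  also have "\<dots> = (\<Sum>k<H. \<bar>(c k * real (H - k) / real H ^ 2) * Rk b L k\<bar>)"
    by (rule sum.mono_neutral_right) auto
  also have "\<dots> \<le> (\<Sum>k<H. \<bar>Rk b L k\<bar> / real H)"
  proof (rule sum_mono)
    fix k assume "k \<in> {..<H}"
    have "\<bar>c k * real (H - k)\<bar> \<le> 1 * real H"
      unfolding abs_mult using cb[of k] by (intro mult_mono) auto
    hence "\<bar>c k * real (H - k) / real H ^ 2\<bar> \<le> 1 / real H"
      using H by (simp add: power2_eq_square divide_simps abs_mult)
    thus "\<bar>(c k * real (H - k) / real H ^ 2) * Rk b L k\<bar> \<le> \<bar>Rk b L k\<bar> / real H"
      unfolding abs_mult by (metis abs_ge_zero divide_inverse_commute mult.commute mult_right_mono inverse_eq_divide)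
  qed
  also have "\<dots> = (\<Sum>k<H. \<bar>Rk b L k\<bar>) / real H" by (simp add: sum_divide_distrib)
  finally have 3: "(\<Sum>j<L+H. QF c L (w j) (w j)) \<le> (\<Sum>k<H. \<bar>Rk b L k\<bar>) / real H" using 2 by simp
  have "QF c L b b \<le> real (L+H) * ((\<Sum>k<H. \<bar>Rk b L k\<bar>) / real H)"
    using 1 3 by (smt (verit) mult_left_mono of_nat_0_le_iff)
  thus ?thesis by simp
qed

definition Tk :: "(nat \<Rightarrow> real) \<Rightarrow> nat \<Rightarrow> nat \<Rightarrow> real" where
  "Tk b L k = (\<Sum>p<L. if p + k < L then b p * b (p+k) else 0)"

lemma Rk_Tk: "\<bar>Rk b L k\<bar> \<le> 2 * \<bar>Tk b L k\<bar>"
proof (cases "k = 0")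
  case True
  have "Rk b L k = (\<Sum>p<L. \<Sum>q<L. if q = p then b p * b q else 0)"
    unfolding Rk_def True by (intro sum.cong refl) (auto simp: nd_def)
  also have "\<dots> = Tk b L k" unfolding Tk_def True by (simp add: sum.delta)
  finally show ?thesis by simp
next
  case False
  have "Rk b L k = (\<Sum>p<L. \<Sum>q<L. (if q = p + k then b p * b q else 0) + (if p = q + k then b p * b q else 0))"
    unfolding Rk_def using False by (intro sum.cong refl) (auto simp: nd_def)
  also have "\<dots> = (\<Sum>p<L. \<Sum>q<L. if q = p + k then b p * b q else 0) + (\<Sum>p<L. \<Sum>q<L. if p = q + k then b p * b q else 0)"
    by (simp add: sum.distrib)
  also have "(\<Sum>p<L. \<Sum>q<L. if q = p + k then b p * b q else 0) = Tk b L k"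
    unfolding Tk_def by (simp add: sum.delta)
  also have "(\<Sum>p<L. \<Sum>q<L. if p = q + k then b p * b q else 0) = (\<Sum>q<L. \<Sum>p<L. if p = q + k then b p * b q else 0)"
    by (rule sum.swap)
  also have "\<dots> = Tk b L k"
    unfolding Tk_def by (simp add: sum.delta) (intro sum.cong refl, simp add: ac_simps)
  finally show ?thesis by simp
qed

lemma Tk_approx:
  assumes bb: "\<And>n. \<bar>b n\<bar> \<le> Mb"
  shows "\<bar>Tk b L k - (\<Sum>p<L. b p * b (p+k))\<bar> \<le> real k * Mb^2"
proof -
  have "Tk b L k - (\<Sum>p<L. b p * b (p+k)) = (\<Sum>p<L. if p + k < L then 0 else - (b p * b (p+k)))"
    unfolding Tk_def by (simp add: sum_subtractf[symmetric] cong: if_cong) (intro sum.cong, auto)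
  also have "\<dots> = (\<Sum>p\<in>{..<L} \<inter> {p. \<not> p + k < L}. - (b p * b (p+k)))"
    by (subst sum.inter_restrict) (auto intro!: sum.cong)
  finally have e: "Tk b L k - (\<Sum>p<L. b p * b (p+k)) = (\<Sum>p\<in>{..<L} \<inter> {p. \<not> p + k < L}. - (b p * b (p+k)))" .
  have "\<bar>\<Sum>p\<in>{..<L} \<inter> {p. \<not> p + k < L}. - (b p * b (p+k))\<bar> \<le> (\<Sum>p\<in>{..<L} \<inter> {p. \<not> p + k < L}. \<bar>b p * b (p+k)\<bar>)"
    by (rule order_trans[OF sum_abs]) simp
  also have "\<dots> \<le> (\<Sum>p\<in>{..<L} \<inter> {p. \<not> p + k < L}. Mb^2)"
  proof (rule sum_mono)
    fix p
    have "\<bar>b p\<bar> * \<bar>b (p+k)\<bar> \<le> Mb * Mb" using bb[of p] bb[of "p+k"] by (intro mult_mono) auto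
    thus "\<bar>b p * b (p+k)\<bar> \<le> Mb^2" by (simp add: abs_mult power2_eq_square)
  qed
  also have "\<dots> = real (card ({..<L} \<inter> {p. \<not> p + k < L})) * Mb^2" by simp
  also have "\<dots> \<le> real k * Mb^2"
  proof (rule mult_right_mono)
    have "{..<L} \<inter> {p. \<not> p + k < L} \<subseteq> {L - k..<L}" by auto
    hence "card ({..<L} \<inter> {p. \<not> p + k < L}) \<le> card {L - k..<L}" by (intro card_mono) auto
    thus "real (card ({..<L} \<inter> {p. \<not> p + k < L})) \<le> real k" by simp
  qed simp
  finally show ?thesis using e by simp
qed

lemma QF_small:
  fixes b c \<gamma> :: "nat \<Rightarrow> real"
  assumes psd: "\<And>N x. 0 \<le> QF c N x x" and cb: "\<And>k. \<bar>c k\<bar> \<le> 1"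
    and bb: "\<And>n. \<bar>b n\<bar> \<le> Mb"
    and gam: "\<And>k. (\<lambda>L. (\<Sum>p<L. b p * b (p+k)) / real L) \<longlonglongrightarrow> \<gamma> k"
    and wm: "(\<lambda>H. (\<Sum>k<H. \<bar>\<gamma> k\<bar>) / real H) \<longlonglongrightarrow> 0"
    and ep: "\<epsilon> > 0"
  shows "eventually (\<lambda>L. QF c L b b \<le> \<epsilon> * real L ^ 2) sequentially"
proof -
  have "eventually (\<lambda>H. (\<Sum>k<H. \<bar>\<gamma> k\<bar>) / real H < \<epsilon> / 4) sequentially"
    using order_tendstoD(2)[OF wm, of "\<epsilon>/4"] ep by simp
  moreover have "eventually (\<lambda>H. H > (0::nat)) sequentially" by (rule eventually_gt_at_top)
  ultimately have "eventually (\<lambda>H. (\<Sum>k<H. \<bar>\<gamma> k\<bar>) / real H < \<epsilon> / 4 \<and> H > 0) sequentially"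
    by eventually_elim simp
  then obtain H where Hg: "(\<Sum>k<H. \<bar>\<gamma> k\<bar>) / real H < \<epsilon> / 4" and H0: "H > 0"
    using eventually_sequentially by auto
  define E where "E L k = \<bar>(\<Sum>p<L. b p * b (p+k)) / real L\<bar> + real k * Mb^2 / real L" for L k
  have Et: "(\<lambda>L. E L k) \<longlonglongrightarrow> \<bar>\<gamma> k\<bar>" for k
  proof -
    have "(\<lambda>L. \<bar>(\<Sum>p<L. b p * b (p+k)) / real L\<bar> + real k * Mb^2 / real L) \<longlonglongrightarrow> \<bar>\<gamma> k\<bar> + 0"
      by (intro tendsto_add tendsto_rabs gam lim_const_over_n)
    thus ?thesis unfolding E_def by simp
  qed
  define B where "B L = 2 * (1 + real H / real L) * ((\<Sum>k<H. E L k) / real H)" for L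
  have "B \<longlonglongrightarrow> 2 * (1 + 0) * ((\<Sum>k<H. \<bar>\<gamma> k\<bar>) / real H)"
    unfolding B_def by (intro tendsto_mult tendsto_const tendsto_add tendsto_divide tendsto_sum Et lim_const_over_n) (use H0 in auto)
  hence "B \<longlonglongrightarrow> 2 * ((\<Sum>k<H. \<bar>\<gamma> k\<bar>) / real H)" by simp
  moreover have "2 * ((\<Sum>k<H. \<bar>\<gamma> k\<bar>) / real H) < \<epsilon>"
  proof -
    have "0 \<le> (\<Sum>k<H. \<bar>\<gamma> k\<bar>) / real H" by (simp add: sum_nonneg)
    thus ?thesis using Hg by linarith
  qed
  ultimately have "eventually (\<lambda>L. B L < \<epsilon>) sequentially" by (rule order_tendstoD(2))
  moreover have "eventually (\<lambda>L. L > (0::nat)) sequentially" by (rule eventually_gt_at_top)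
  ultimately show ?thesis
  proof eventually_elim
    case (elim L)
    hence L0: "real L > 0" by simp
    have "QF c L b b \<le> real (L+H) / real H * (\<Sum>k<H. \<bar>Rk b L k\<bar>)"
      by (rule vdc[OF psd cb H0])
    also have "\<dots> \<le> real (L+H) / real H * (\<Sum>k<H. 2 * (real L * E L k))"
    proof (intro mult_left_mono sum_mono)
      fix k
      have "\<bar>Tk b L k\<bar> \<le> \<bar>\<Sum>p<L. b p * b (p+k)\<bar> + real k * Mb^2"
        using Tk_approx[where b=b and Mb=Mb and L=L and k=k, OF bb] by linarith
      also have "\<dots> = real L * E L k" unfolding E_def using L0 by (simp add: field_simps abs_divide)
      finally show "\<bar>Rk b L k\<bar> \<le> 2 * (real L * E L k)" using Rk_Tk[of b L k] by linarith
    qed simp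
    also have "\<dots> = real (L+H) / real H * (2 * real L * (\<Sum>k<H. E L k))"
      by (simp add: sum_distrib_left mult.assoc)
    also have "\<dots> = real L ^ 2 * B L"
      unfolding B_def using L0 H0
      by (simp add: field_simps power2_eq_square)
    also have "\<dots> \<le> real L ^ 2 * \<epsilon>" using elim by (intro mult_left_mono) auto
    finally show ?case by (simp add: mult.commute)
  qed
qed

lemma nd_Suc[simp]: "nd (Suc p) (Suc q) = nd p q" by (simp add: nd_def)
lemma nd_0[simp]: "nd 0 q = q" "nd p 0 = p" "nd p p = 0" by (auto simp: nd_def)

lemma QF_shift: "QF c (Suc L) (\<lambda>p. if p = 0 then 0 else b (p - 1)) (\<lambda>p. if p = 0 then 0 else b (p - 1)) = QF c L b b"
  unfolding QF_def sum.lessThan_Suc_shift by simp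

lemma QF_e0: "QF c (Suc L) (\<lambda>p. if p = 0 then t else 0) (\<lambda>p. if p = 0 then 0 else b (p - 1)) = t * (\<Sum>n<L. b n * c (Suc n))"
  unfolding QF_def sum.lessThan_Suc_shift by (simp add: nd_def sum_distrib_left mult_ac)

lemma QF_e0e0: "QF c (Suc L) (\<lambda>p. if p = 0 then t else 0) (\<lambda>p. if p = 0 then t else 0) = t * t * c 0"
  unfolding QF_def sum.lessThan_Suc_shift by (simp add: nd_def)

lemma stepC:
  fixes b c :: "nat \<Rightarrow> real"
  assumes psd: "\<And>N x. 0 \<le> QF c N x x" and cb: "\<And>k. \<bar>c k\<bar> \<le> 1"
    and ev: "eventually (\<lambda>L. QF c L b b \<le> \<eta>^2 * real L ^ 2) sequentially" and eta: "\<eta> > 0"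
  shows "eventually (\<lambda>L. \<bar>\<Sum>n<L. b n * c (Suc n)\<bar> \<le> \<eta> * real L) sequentially"
  using ev eventually_gt_at_top[of 0]
proof eventually_elim
  case (elim L)
  define t where "t = \<eta> * real L"
  have tp: "t > 0" unfolding t_def using elim eta by simp
  let ?X = "\<Sum>n<L. b n * c (Suc n)"
  have "2 * \<bar>t * ?X\<bar> \<le> t * t * c 0 + QF c L b b"
    using QF_cs[OF psd, of "Suc L" "\<lambda>p. if p = 0 then t else 0" "\<lambda>p. if p = 0 then 0 else b (p - 1)"]
    by (simp only: QF_shift QF_e0 QF_e0e0)
  also have "\<dots> \<le> t * t + \<eta>^2 * real L ^ 2"
    using elim cb[of 0] tp by (smt (verit) abs_le_iff mult_left_le mult_pos_pos)
  also have "\<dots> = 2 * t * t" unfolding t_def by (simp add: power2_eq_square)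
  finally have "2 * t * \<bar>?X\<bar> \<le> 2 * t * t" using tp by (simp add: abs_mult)
  hence "\<bar>?X\<bar> \<le> t" using tp by simp
  thus ?case unfolding t_def .
qed

lemma cesaro_shift:
  fixes a :: "nat \<Rightarrow> real"
  assumes "(\<lambda>N. (\<Sum>n<N. a n) / real N) \<longlonglongrightarrow> l"
  shows "(\<lambda>N. (\<Sum>n<N. a (n + k)) / real N) \<longlonglongrightarrow> l"
proof -
  have e: "(\<Sum>n<N. a (n + k)) = (\<Sum>n<N+k. a n) - (\<Sum>n<k. a n)" for N
  proof -
    have "(\<Sum>n<N+k. a n) = (\<Sum>n\<in>{0..<k}. a n) + (\<Sum>n\<in>{k..<N+k}. a n)"
      by (simp add: sum.atLeastLessThan_concat atLeast0LessThan[symmetric])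
    also have "(\<Sum>n\<in>{k..<N+k}. a n) = (\<Sum>n\<in>{0..<N}. a (n + k))"
      using sum.shift_bounds_nat_ivl[of a 0 k N] by simp
    finally show ?thesis by (simp add: atLeast0LessThan)
  qed
  have t1: "(\<lambda>N. (\<Sum>n<N+k. a n) / real (N+k)) \<longlonglongrightarrow> l"
    using LIMSEQ_ignore_initial_segment[OF assms, of k] by simp
  have t2: "(\<lambda>N. real (N+k) / real N) \<longlonglongrightarrow> 1"
  proof -
    have "(\<lambda>N. 1 + real k / real N) \<longlonglongrightarrow> 1 + 0" by (intro tendsto_add tendsto_const lim_const_over_n)
    moreover have "eventually (\<lambda>N. 1 + real k / real N = real (N+k) / real N) sequentially"
      using eventually_gt_at_top[of 0] by eventually_elim (simp add: field_simps)
    ultimately show ?thesis by (simp add: tendsto_cong)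
  qed
  have "(\<lambda>N. (\<Sum>n<N+k. a n) / real (N+k) * (real (N+k) / real N) - (\<Sum>n<k. a n) / real N) \<longlonglongrightarrow> l * 1 - 0"
    by (intro tendsto_diff tendsto_mult t1 t2 lim_const_over_n)
  moreover have "eventually (\<lambda>N. (\<Sum>n<N+k. a n) / real (N+k) * (real (N+k) / real N) - (\<Sum>n<k. a n) / real N = (\<Sum>n<N. a (n + k)) / real N) sequentially"
    using eventually_gt_at_top[of 0]
  proof eventually_elim
    case (elim N)
    hence "real (N+k) > 0" "real N > 0" by auto
    thus ?case by (simp add: e field_simps del: of_nat_add)
  qed
  ultimately show ?thesis by (simp add: tendsto_cong)
qed

lemma key_lemma_wm:
  fixes c s \<beta> :: "nat \<Rightarrow> real"
  assumes cb: "\<And>k. \<bar>c k\<bar> \<le> 1" and psd: "\<And>N x. 0 \<le> QF c N x x"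
    and dl: "\<delta> > 0" and fej: "\<And>N. \<delta> * real N ^ 2 \<le> QF c N (\<lambda>_. 1) (\<lambda>_. 1)"
    and s01: "\<And>n. s n = 0 \<or> s n = 1"
    and dpos: "d > 0"
    and sd: "(\<lambda>N. (\<Sum>n<N. s n) / real N) \<longlonglongrightarrow> d"
    and sb: "\<And>k. (\<lambda>N. (\<Sum>n<N. s n * s (n+k)) / real N) \<longlonglongrightarrow> \<beta> k"
    and wm: "(\<lambda>H. (\<Sum>k<H. \<bar>\<beta> k - d^2\<bar>) / real H) \<longlonglongrightarrow> 0"
  shows "\<exists>n. s n = 1 \<and> c (Suc n) > 0"
proof (rule ccontr)
  assume nt: "\<not> ?thesis"
  hence neg: "\<And>n. s n * c (Suc n) \<le> 0"
  proof -
    fix n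
    show "s n * c (Suc n) \<le> 0"
    proof (cases "s n = 0")
      case False
      hence "s n = 1" using s01[of n] by simp
      with nt have "\<not> c (Suc n) > 0" by blast
      thus ?thesis using \<open>s n = 1\<close> by simp
    qed simp
  qed
  define b where "b n = s n - d" for n
  have bb: "\<bar>b n\<bar> \<le> 1 + d" for n using s01[of n] dpos by (auto simp: b_def)
  have gam: "(\<lambda>L. (\<Sum>p<L. b p * b (p+k)) / real L) \<longlonglongrightarrow> \<beta> k - d^2" for k
  proof -
    have "(\<lambda>L. (\<Sum>p<L. s p * s (p+k)) / real L - d * ((\<Sum>p<L. s p) / real L) - d * ((\<Sum>p<L. s (p+k)) / real L) + d^2 * (real L / real L))
      \<longlonglongrightarrow> \<beta> k - d * d - d * d + d^2 * 1"
    proof -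
      have t1: "(\<lambda>L. real L / real L) \<longlonglongrightarrow> 1"
        by (rule tendsto_eventually) (use eventually_gt_at_top[of 0] in eventually_elim, simp)
      show ?thesis
        by (rule tendsto_add[OF tendsto_diff[OF tendsto_diff[OF sb tendsto_mult[OF tendsto_const sd]] tendsto_mult[OF tendsto_const cesaro_shift[OF sd]]] tendsto_mult[OF tendsto_const t1]])
    qed
    moreover have "(\<Sum>p<L. s p * s (p+k)) / real L - d * ((\<Sum>p<L. s p) / real L) - d * ((\<Sum>p<L. s (p+k)) / real L) + d^2 * (real L / real L)
        = (\<Sum>p<L. b p * b (p+k)) / real L" for L
    proof -
      have "(\<Sum>p<L. b p * b (p+k)) = (\<Sum>p<L. s p * s (p+k)) - d * (\<Sum>p<L. s p) - d * (\<Sum>p<L. s (p+k)) + d^2 * real L"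
        unfolding b_def by (simp add: algebra_simps sum.distrib sum_subtractf sum_distrib_left power2_eq_square)
      thus ?thesis by (cases "L = 0") (simp_all add: add_divide_distrib diff_divide_distrib)
    qed
    ultimately show ?thesis by (simp add: power2_eq_square)
  qed
  define \<alpha> where "\<alpha> = \<delta> / 4"
  have ap: "\<alpha> > 0" using dl by (simp add: \<alpha>_def)
  define \<eta> where "\<eta> = d * \<alpha> / 2"
  have etap: "\<eta> > 0" using ap dpos by (simp add: \<eta>_def)
  have "eventually (\<lambda>L. QF c L b b \<le> \<eta>^2 * real L ^ 2) sequentially"
    by (rule QF_small[OF psd cb bb gam]) (use wm etap in simp_all)
  hence "eventually (\<lambda>L. \<bar>\<Sum>n<L. b n * c (Suc n)\<bar> \<le> \<eta> * real L) sequentially"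
    by (rule stepC[OF psd cb _ etap])
  then obtain L0 where L0: "\<And>L. L \<ge> L0 \<Longrightarrow> \<bar>\<Sum>n<L. b n * c (Suc n)\<bar> \<le> \<eta> * real L"
    by (auto simp: eventually_sequentially)
  obtain L where L: "L \<ge> L0" "(\<Sum>n<L. c (Suc n)) > \<alpha> * real L"
    using fej_inf[OF cb dl fej, of L0] unfolding \<alpha>_def by blast
  have Lpos: "real L > 0" using L(2) ap by (cases L) auto
  have "(\<Sum>n<L. b n * c (Suc n)) = (\<Sum>n<L. s n * c (Suc n)) - d * (\<Sum>n<L. c (Suc n))"
    by (simp add: b_def algebra_simps sum_subtractf sum_distrib_left)
  also have "\<dots> \<le> 0 - d * (\<Sum>n<L. c (Suc n))" using sum_nonpos[of "{..<L}" "\<lambda>n. s n * c (Suc n)"] neg by auto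
  also have "\<dots> < - d * (\<alpha> * real L)" using L(2) dpos by simp
  finally have X: "(\<Sum>n<L. b n * c (Suc n)) < - (d * \<alpha> * real L)" by simp
  have "0 < d * \<alpha> * real L" using Lpos dpos ap by simp
  moreover have "\<eta> * real L = d * \<alpha> * real L / 2" unfolding \<eta>_def by simp
  ultimately have "\<eta> * real L < \<bar>\<Sum>n<L. b n * c (Suc n)\<bar>" using X by linarith
  with L0[OF L(1)] show False by simp
qed




lemma diag_conv:
  fixes f :: "nat \<Rightarrow> nat \<Rightarrow> real"
  assumes bdd: "\<And>j k. \<bar>f j k\<bar> \<le> M"
  shows "\<exists>r. strict_mono r \<and> (\<forall>k. convergent (\<lambda>j. f (r j) k))"
proof -
  let ?P = "\<lambda>k s. convergent (\<lambda>j. f (s j) k)"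
  interpret nat: subseqs ?P
  proof (unfold convergent_def, unfold subseqs_def, auto)
    fix n :: nat and s :: "nat \<Rightarrow> nat" assume s: "strict_mono s"
    have "bounded {-M..M}" by auto
    moreover have "\<And>k. f (s k) n \<in> {-M..M}"
      using bdd by (simp add: abs_le_iff minus_le_iff)
    ultimately have "\<exists>l s'. strict_mono s' \<and> ((\<lambda>k. f (s k) n) \<circ> s') \<longlonglongrightarrow> l"
      using compact_Icc compact_imp_seq_compact seq_compactE by metis
    thus "\<exists>s'. strict_mono (s'::nat\<Rightarrow>nat) \<and> (\<exists>l. (\<lambda>k. f (s (s' k)) n) \<longlonglongrightarrow> l)"
      by (auto simp: comp_def)
  qed
  have "?P k nat.diagseq" for k
  proof -
    have "?P k (nat.diagseq \<circ> ((+) (Suc k)))"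
    proof (rule nat.diagseq_holds)
      fix r s n assume "strict_mono (r :: nat \<Rightarrow> nat)" "?P n s"
      thus "?P n (s \<circ> r)" using convergent_subseq_convergent[of "\<lambda>j. f (s j) n" r] by (simp add: comp_def)
    qed
    then obtain L where "(\<lambda>j. f (nat.diagseq (Suc k + j)) k) \<longlonglongrightarrow> L"
      by (auto simp: convergent_def comp_def)
    hence "(\<lambda>j. f (nat.diagseq (j + Suc k)) k) \<longlonglongrightarrow> L" by (simp add: add.commute)
    hence "(\<lambda>j. f (nat.diagseq j) k) \<longlonglongrightarrow> L" by (rule LIMSEQ_offset)
    thus ?thesis by (auto simp: convergent_def)
  qed
  thus ?thesis using nat.subseq_diagseq by blast
qed

lemma sum_ivl_split: "(a::nat) \<le> b \<Longrightarrow> (\<Sum>x\<in>{a..<b}. g x) = (\<Sum>x<b. g x) - (\<Sum>x<a. (g x :: real))"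
proof -
  assume ab: "a \<le> b"
  have "(\<Sum>x<b. g x) = (\<Sum>x\<in>{0..<a}. g x) + (\<Sum>x\<in>{a..<b}. g x)"
    using ab by (simp add: sum.atLeastLessThan_concat atLeast0LessThan[symmetric])
  thus ?thesis by (simp add: atLeast0LessThan)
qed

lemma shift_sum_bound:
  fixes g :: "nat \<Rightarrow> real"
  assumes g0: "\<And>x. 0 \<le> g x" and g1: "\<And>x. g x \<le> 1"
  shows "\<bar>(\<Sum>x\<in>{P..<P+l}. g (x + m)) - (\<Sum>x\<in>{P..<P+l}. g x)\<bar> \<le> real m"
proof -
  define G where "G n = (\<Sum>x<n. g x)" for n
  have inc: "0 \<le> G (n + m) - G n \<and> G (n + m) - G n \<le> real m" for n
  proof -
    have e: "G (n + m) - G n = (\<Sum>x\<in>{n..<n+m}. g x)" unfolding G_def by (simp add: sum_ivl_split)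
    have "(\<Sum>x\<in>{n..<n+m}. g x) \<le> (\<Sum>x\<in>{n..<n+m}. 1)" by (rule sum_mono) (rule g1)
    moreover have "0 \<le> (\<Sum>x\<in>{n..<n+m}. g x)" by (rule sum_nonneg) (rule g0)
    ultimately show ?thesis unfolding e by simp
  qed
  have "(\<Sum>x\<in>{P..<P+l}. g (x + m)) = (\<Sum>x\<in>{P+m..<P+l+m}. g x)"
    using sum.shift_bounds_nat_ivl[of g P m "P+l"] by (simp add: add.commute add.left_commute)
  also have "\<dots> = G (P + l + m) - G (P + m)" unfolding G_def by (simp add: sum_ivl_split)
  finally have 1: "(\<Sum>x\<in>{P..<P+l}. g (x + m)) = G (P + l + m) - G (P + m)" .
  have 2: "(\<Sum>x\<in>{P..<P+l}. g x) = G (P + l) - G P" unfolding G_def by (simp add: sum_ivl_split)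
  show ?thesis using inc[of "P + l"] inc[of P] unfolding 1 2 by (simp add: abs_le_iff)
qed

lemma const_over_l:
  fixes l r :: "nat \<Rightarrow> nat"
  assumes lj: "\<And>j. l j > j" and r: "strict_mono r"
  shows "(\<lambda>j. C / real (l (r j))) \<longlonglongrightarrow> 0"
proof -
  have "(\<lambda>j. \<bar>C\<bar> / real (Suc j)) \<longlonglongrightarrow> 0"
    using LIMSEQ_Suc[OF lim_const_over_n[of "\<bar>C\<bar>"]] by simp
  moreover have "norm (C / real (l (r j))) \<le> \<bar>C\<bar> / real (Suc j)" for j
  proof -
    have "j \<le> r j" using r by (rule seq_suble)
    hence "real (Suc j) \<le> real (l (r j))" using lj[of "r j"] by simp
    thus ?thesis by (simp add: abs_divide frac_le)
  qed
  hence ev: "eventually (\<lambda>j. norm (C / real (l (r j))) \<le> \<bar>C\<bar> / real (Suc j)) sequentially"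
    by (intro always_eventually allI)
  show ?thesis by (rule Lim_null_comparison[OF ev]) fact
qed

definition Kf :: "nat set \<Rightarrow> nat \<Rightarrow> nat \<Rightarrow> nat \<Rightarrow> nat \<Rightarrow> real" where
  "Kf E P l m q = (\<Sum>x\<in>{P..<P+l}. (if x + m \<in> E then 1 else 0) * (if x + q \<in> E then 1 else 0)) / real l"

lemma Kf_sym: "Kf E P l m q = Kf E P l q m"
  unfolding Kf_def by (simp add: mult.commute)

lemma frac01: "0 \<le> (S::real) \<Longrightarrow> S \<le> real l \<Longrightarrow> l > 0 \<Longrightarrow> 0 \<le> S / real l \<and> S / real l \<le> 1"
  by (simp add: divide_le_eq)

lemma Kf_bound: "l > 0 \<Longrightarrow> 0 \<le> Kf E P l m q \<and> Kf E P l m q \<le> 1"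
proof -
  assume l: "l > 0"
  have "(\<Sum>x\<in>{P..<P+l}. (if x + m \<in> E then 1 else 0) * (if x + q \<in> E then 1 else (0::real))) \<le> (\<Sum>x\<in>{P..<P+l}. 1)"
    by (rule sum_mono) auto
  moreover have "0 \<le> (\<Sum>x\<in>{P..<P+l}. (if x + m \<in> E then 1 else 0) * (if x + q \<in> E then 1 else (0::real)))"
    by (rule sum_nonneg) auto
  ultimately show ?thesis using l unfolding Kf_def by (intro frac01) simp_all
qed

lemma div_diff_bound: "(l::nat) > 0 \<Longrightarrow> \<bar>A - B\<bar> \<le> (m::real) \<Longrightarrow> \<bar>A / real l - B / real l\<bar> \<le> m / real l"
proof -
  assume l: "l > 0" and h: "\<bar>A - B\<bar> \<le> m"
  have "\<bar>A / real l - B / real l\<bar> = \<bar>A - B\<bar> / real l" by (simp add: diff_divide_distrib[symmetric] abs_divide)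
  also have "\<dots> \<le> m / real l" using h l by (intro divide_right_mono) auto
  finally show ?thesis .
qed

lemma Kf_approx_le: "l > 0 \<Longrightarrow> m \<le> q \<Longrightarrow> \<bar>Kf E P l m q - Kf E P l 0 (q - m)\<bar> \<le> real m / real l"
proof -
  assume l: "l > 0" and mq: "m \<le> q"
  define g where "g y = (if y \<in> E then 1 else 0) * (if y + (q - m) \<in> E then 1 else (0::real))" for y
  have "Kf E P l m q = (\<Sum>x\<in>{P..<P+l}. g (x + m)) / real l"
    unfolding Kf_def g_def using mq by (simp add: add.assoc)
  moreover have "Kf E P l 0 (q - m) = (\<Sum>x\<in>{P..<P+l}. g x) / real l"
    unfolding Kf_def g_def by simp
  moreover have "\<bar>(\<Sum>x\<in>{P..<P+l}. g (x + m)) - (\<Sum>x\<in>{P..<P+l}. g x)\<bar> \<le> real m"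
    by (rule shift_sum_bound) (auto simp: g_def)
  ultimately show ?thesis using div_diff_bound[OF l] by metis
qed

lemma Kf_approx: "l > 0 \<Longrightarrow> \<bar>Kf E P l m q - Kf E P l 0 (nd m q)\<bar> \<le> real (m + q) / real l"
proof -
  assume l: "l > 0"
  show ?thesis
  proof (cases "m \<le> q")
    case True
    have "real m / real l \<le> real (m + q) / real l" using l by (simp add: divide_right_mono)
    moreover have "nd m q = q - m" using True by (simp add: nd_def)
    ultimately show ?thesis using Kf_approx_le[OF l True, of E P] by (metis order_trans)
  next
    case False
    have "real q / real l \<le> real (m + q) / real l" using l by (simp add: divide_right_mono)
    moreover have "nd m q = m - q" using False by (simp add: nd_def)
    moreover have "q \<le> m" using False by simp
    ultimately show ?thesis using Kf_approx_le[OF l \<open>q \<le> m\<close>, of E P] Kf_sym[of E P l m q] by (metis order_trans)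
  qed
qed

definition QK :: "nat set \<Rightarrow> nat \<Rightarrow> nat \<Rightarrow> nat \<Rightarrow> (nat \<Rightarrow> real) \<Rightarrow> real" where
  "QK E P l N y = (\<Sum>p<N. \<Sum>q<N. y p * y q * Kf E P l p q)"

lemma QK_sq: "QK E P l N y = (\<Sum>x\<in>{P..<P+l}. (\<Sum>p<N. y p * (if x + p \<in> E then 1 else 0))^2) / real l"
proof -
  let ?e = "\<lambda>z. if z \<in> E then 1 else (0::real)"
  have "QK E P l N y = (\<Sum>p<N. \<Sum>q<N. (\<Sum>x\<in>{P..<P+l}. (y p * ?e (x + p)) * (y q * ?e (x + q)))) / real l"
    unfolding QK_def Kf_def by (simp add: sum_divide_distrib sum_distrib_left mult_ac)
  also have "(\<Sum>p<N. \<Sum>q<N. (\<Sum>x\<in>{P..<P+l}. (y p * ?e (x + p)) * (y q * ?e (x + q))))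
      = (\<Sum>x\<in>{P..<P+l}. \<Sum>p<N. \<Sum>q<N. (y p * ?e (x + p)) * (y q * ?e (x + q)))"
    by (simp add: sum.swap[of _ "{P..<P+l}"])
  also have "\<dots> = (\<Sum>x\<in>{P..<P+l}. (\<Sum>p<N. y p * ?e (x + p))^2)"
    by (simp only: power2_eq_square sum_product)
  finally show ?thesis .
qed

lemma QK_nonneg: "0 \<le> QK E P l N y"
  unfolding QK_sq by (intro divide_nonneg_nonneg sum_nonneg) auto

lemma QK_fej:
  assumes l: "l > 0" and d: "\<delta>0 * real l \<le> (\<Sum>x\<in>{P..<P+l}. if x \<in> E then 1 else 0)"
    and big: "real N * real N \<le> \<delta>0 * real N * real l"
  shows "(real N * \<delta>0 - real N * real N / real l)^2 \<le> QK E P l N (\<lambda>_. 1)"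
proof -
  let ?e = "\<lambda>z. if z \<in> E then 1 else (0::real)"
  let ?h = "\<lambda>x. (\<Sum>p<N. ?e (x + p))"
  have cs: "(\<Sum>x\<in>{P..<P+l}. ?h x)^2 \<le> (\<Sum>x\<in>{P..<P+l}. (?h x)^2) * real l"
    using sum_squared_le_sum_of_squares[of ?h "{P..<P+l}"] by simp
  have rows: "\<delta>0 * real l - real N \<le> (\<Sum>x\<in>{P..<P+l}. ?e (x + p))" if "p < N" for p
  proof -
    have "\<bar>(\<Sum>x\<in>{P..<P+l}. ?e (x + p)) - (\<Sum>x\<in>{P..<P+l}. ?e x)\<bar> \<le> real p"
      by (rule shift_sum_bound) auto
    thus ?thesis using d that by linarith
  qed
  have "(\<Sum>x\<in>{P..<P+l}. ?h x) = (\<Sum>p<N. \<Sum>x\<in>{P..<P+l}. ?e (x + p))" by (rule sum.swap)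
  also have "\<dots> \<ge> (\<Sum>p<N. \<delta>0 * real l - real N)" by (rule sum_mono) (use rows in auto)
  finally have lb: "real N * (\<delta>0 * real l - real N) \<le> (\<Sum>x\<in>{P..<P+l}. ?h x)" by simp
  have lb0: "0 \<le> real N * \<delta>0 - real N * real N / real l"
    using big l by (simp add: field_simps)
  have "real N * \<delta>0 - real N * real N / real l = real N * (\<delta>0 * real l - real N) / real l"
    using l by (simp add: field_simps)
  also have "\<dots> \<le> (\<Sum>x\<in>{P..<P+l}. ?h x) / real l"
    using lb l by (intro divide_right_mono) auto
  finally have "real N * \<delta>0 - real N * real N / real l \<le> (\<Sum>x\<in>{P..<P+l}. ?h x) / real l" .
  hence "(real N * \<delta>0 - real N * real N / real l)^2 \<le> ((\<Sum>x\<in>{P..<P+l}. ?h x) / real l)^2"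
    using lb0 by (intro power_mono) auto
  also have "\<dots> = (\<Sum>x\<in>{P..<P+l}. ?h x)^2 / (real l * real l)" by (simp add: power2_eq_square)
  also have "\<dots> \<le> (\<Sum>x\<in>{P..<P+l}. (?h x)^2) * real l / (real l * real l)"
    using cs l by (intro divide_right_mono) auto
  also have "\<dots> = (\<Sum>x\<in>{P..<P+l}. (?h x)^2) / real l" using l by simp
  also have "\<dots> = QK E P l N (\<lambda>_. 1)" unfolding QK_sq by simp
  finally show ?thesis .
qed

lemma kernel_from_intervals:
  fixes P l :: "nat \<Rightarrow> nat" and E :: "nat set"
  assumes lj: "\<And>j. l j > j"
    and dj: "\<And>j. \<delta>0 * real (l j) \<le> (\<Sum>x\<in>{P j..<P j + l j}. if x \<in> E then 1 else 0)"
    and d0: "\<delta>0 > 0"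
  shows "\<exists>c. (\<forall>k. \<bar>c k\<bar> \<le> 1) \<and> (\<forall>N x. 0 \<le> QF c N x x) \<and> (\<forall>N. \<delta>0^2 * real N ^ 2 \<le> QF c N (\<lambda>_. 1) (\<lambda>_. 1))
           \<and> (\<forall>k. c k > 0 \<longrightarrow> (\<exists>m\<in>E. m + k \<in> E))"
proof -
  have lpos: "l j > 0" for j using lj[of j] by simp
  define K where "K j m q = Kf E (P j) (l j) m q" for j m q
  have Kb: "\<bar>K j 0 k\<bar> \<le> 1" for j k using Kf_bound[OF lpos[of j], of E "P j" 0 k] by (simp add: K_def)
  obtain r where r: "strict_mono r" and conv: "\<And>k. convergent (\<lambda>j. K (r j) 0 k)"
    using diag_conv[of "\<lambda>j k. K j 0 k" 1, OF Kb] by blast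
  define c where "c k = lim (\<lambda>j. K (r j) 0 k)" for k
  have clim: "(\<lambda>j. K (r j) 0 k) \<longlonglongrightarrow> c k" for k
    unfolding c_def using conv[of k] by (simp add: convergent_LIMSEQ_iff)
  have cb: "\<bar>c k\<bar> \<le> 1" for k
  proof -
    have "0 \<le> c k" by (rule LIMSEQ_le_const[OF clim]) (use Kf_bound lpos in \<open>auto simp: K_def\<close>)
    moreover have "c k \<le> 1" by (rule LIMSEQ_le_const2[OF clim]) (use Kf_bound lpos in \<open>auto simp: K_def\<close>)
    ultimately show ?thesis by simp
  qed
  have Klim: "(\<lambda>j. K (r j) m q) \<longlonglongrightarrow> c (nd m q)" for m q
  proof -
    have "(\<lambda>j. K (r j) m q - K (r j) 0 (nd m q)) \<longlonglongrightarrow> 0"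
    proof (rule Lim_null_comparison[OF always_eventually])
      show "\<forall>j. norm (K (r j) m q - K (r j) 0 (nd m q)) \<le> real (m + q) / real (l (r j))"
        using Kf_approx[OF lpos] by (simp add: K_def)
      show "(\<lambda>j. real (m + q) / real (l (r j))) \<longlonglongrightarrow> 0" by (rule const_over_l[OF lj r])
    qed
    from tendsto_add[OF this clim[of "nd m q"]] show ?thesis by simp
  qed
  have QKlim: "(\<lambda>j. QK E (P (r j)) (l (r j)) N y) \<longlonglongrightarrow> QF c N y y" for N y
    unfolding QK_def QF_def K_def[symmetric]
    by (intro tendsto_sum tendsto_mult_left Klim)
  have psd: "0 \<le> QF c N y y" for N y
    by (rule LIMSEQ_le_const[OF QKlim]) (simp add: QK_nonneg)
  have fej: "\<delta>0^2 * real N ^ 2 \<le> QF c N (\<lambda>_. 1) (\<lambda>_. 1)" for N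
  proof -
    have lim2: "(\<lambda>j. (real N * \<delta>0 - real N * real N / real (l (r j)))^2) \<longlonglongrightarrow> (real N * \<delta>0 - 0)^2"
      by (intro tendsto_power tendsto_diff tendsto_const const_over_l[OF lj r])
    have "(real N * \<delta>0 - 0)^2 \<le> QF c N (\<lambda>_. 1) (\<lambda>_. 1)"
    proof (rule LIMSEQ_le[OF lim2 QKlim], intro exI allI impI)
      fix j assume j: "j \<ge> nat \<lceil>real N / \<delta>0\<rceil>"
      have "real N / \<delta>0 \<le> real j" using j by linarith
      also have "\<dots> \<le> real (l (r j))" using lj[of "r j"] seq_suble[OF r, of j] by simp
      finally have "real N \<le> \<delta>0 * real (l (r j))" using d0 by (simp add: divide_le_eq mult.commute)
      hence big: "real N * real N \<le> \<delta>0 * real N * real (l (r j))"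
        by (metis mult.assoc mult.commute mult_left_mono of_nat_0_le_iff)
      show "(real N * \<delta>0 - real N * real N / real (l (r j)))^2 \<le> QK E (P (r j)) (l (r j)) N (\<lambda>_. 1)"
        by (rule QK_fej[OF lpos dj big])
    qed
    thus ?thesis by (simp add: power_mult_distrib mult.commute)
  qed
  have rec: "\<exists>m\<in>E. m + k \<in> E" if ck: "c k > 0" for k
  proof -
    have "eventually (\<lambda>j. K (r j) 0 k > 0) sequentially" using order_tendstoD(1)[OF clim ck] .
    then obtain j where "K (r j) 0 k > 0" by (auto simp: eventually_sequentially)
    hence "0 < (\<Sum>x\<in>{P (r j)..<P (r j) + l (r j)}. (if x \<in> E then 1 else 0) * (if x + k \<in> E then 1 else (0::real)))"
      unfolding K_def Kf_def using lpos[of "r j"] by (simp add: zero_less_divide_iff)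
    then obtain x where "(if x \<in> E then 1 else 0) * (if x + k \<in> E then 1 else (0::real)) > 0"
      by (metis (no_types, lifting) not_le sum_nonpos)
    hence "x \<in> E" "x + k \<in> E" by (auto split: if_splits)
    thus ?thesis by blast
  qed
  show ?thesis using cb psd fej rec by blast
qed




context
  fixes M :: "'a measure" and T :: "'a \<Rightarrow> 'a" and A :: "'a set"
  assumes P: "prob_space M" and Tm: "T \<in> measurable M M" and Td: "distr M M T = M" and Am: "A \<in> sets M"
begin

lemma Tn_meas: "(T ^^ n) \<in> measurable M M"
proof (induction n)
  case (Suc n) thus ?case using measurable_comp[OF Suc.IH Tm] by (simp add: comp_def)
qed simp

lemma Tn_distr: "distr M M (T ^^ n) = M"
proof (induction n)
  case 0 show ?case by (simp add: distr_id2)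
next
  case (Suc n)
  have "distr M M (T ^^ Suc n) = distr M M ((T ^^ n) \<circ> T)" by (simp only: funpow_Suc_right)
  also have "\<dots> = distr (distr M M T) M (T ^^ n)"
    by (subst distr_distr) (auto simp: Tm Tn_meas)
  also have "\<dots> = M" using Td Suc.IH by simp
  finally show ?case .
qed

lemma Tn_pres: "C \<in> sets M \<Longrightarrow> measure M ((T ^^ n) -` C \<inter> space M) = measure M C"
  using measure_distr[OF Tn_meas, of C n] Tn_distr[of n] by simp

lemma Tn_space: "x \<in> space M \<Longrightarrow> (T ^^ n) x \<in> space M"
  using Tn_meas[of n] by (auto simp: measurable_def)

definition Ap :: "nat \<Rightarrow> 'a set" where "Ap p = (T ^^ p) -` A \<inter> space M"

lemma Ap_sets: "Ap p \<in> sets M"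
  unfolding Ap_def using Tn_meas Am by (auto intro: measurable_sets)

definition cc :: "nat \<Rightarrow> real" where "cc k = measure M (A \<inter> ((T ^^ k) -` A \<inter> space M))"

lemma cc_inter: "m \<le> n \<Longrightarrow> measure M (Ap m \<inter> Ap n) = cc (n - m)"
proof -
  assume mn: "m \<le> n"
  have "Ap m \<inter> Ap n = (T ^^ m) -` (A \<inter> ((T ^^ (n - m)) -` A \<inter> space M)) \<inter> space M"
  proof -
    have "(T ^^ n) = (T ^^ (n - m)) \<circ> (T ^^ m)" using mn by (simp add: funpow_add[symmetric])
    thus ?thesis unfolding Ap_def using Tn_space by auto
  qed
  moreover have "A \<inter> ((T ^^ (n - m)) -` A \<inter> space M) \<in> sets M"
    using Ap_sets[of "n-m"] Am unfolding Ap_def by auto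
  ultimately show ?thesis unfolding cc_def using Tn_pres by metis
qed

lemma cc_nd: "measure M (Ap p \<inter> Ap q) = cc (nd p q)"
  unfolding nd_def using cc_inter[of p q] cc_inter[of q p] by (auto simp: Int_commute)

lemma cc_bound: "\<bar>cc k\<bar> \<le> 1"
  unfolding cc_def using prob_space.prob_le_1[OF P] by (simp add: measure_nonneg)

lemma ind_integrable: "integrable M (\<lambda>\<omega>. indicator (Ap p) \<omega> * indicator (Ap q) \<omega> :: real)"
proof -
  have "(\<lambda>\<omega>. indicator (Ap p) \<omega> * indicator (Ap q) \<omega> :: real) = indicator (Ap p \<inter> Ap q)"
    by (auto simp: indicator_def)
  moreover have "integrable M (indicator (Ap p \<inter> Ap q) :: _ \<Rightarrow> real)"
    using Ap_sets[of p] Ap_sets[of q] finite_measure.emeasure_finite[OF prob_space.axioms(1)[OF P]]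
    by (auto simp: integrable_indicator_iff sets.Int_space_eq2 top.not_eq_extremum)
  ultimately show ?thesis by simp
qed

lemma QF_cc_integral:
  "QF cc N x y = (\<integral>\<omega>. (\<Sum>p<N. x p * indicator (Ap p) \<omega>) * (\<Sum>q<N. y q * indicator (Ap q) \<omega>) \<partial>M)"
proof -
  have "QF cc N x y = (\<Sum>p<N. \<Sum>q<N. x p * y q * (\<integral>\<omega>. indicator (Ap p) \<omega> * indicator (Ap q) \<omega> \<partial>M))"
    unfolding QF_def
  proof (intro sum.cong refl)
    fix p q
    have "(\<lambda>\<omega>. indicator (Ap p) \<omega> * indicator (Ap q) \<omega> :: real) = indicator (Ap p \<inter> Ap q)"
      by (auto simp: indicator_def)
    hence "(\<integral>\<omega>. indicator (Ap p) \<omega> * indicator (Ap q) \<omega> \<partial>M) = measure M (Ap p \<inter> Ap q)"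
      using Ap_sets[of p] by (simp add: Ap_def Int_assoc)
    thus "x p * y q * cc (nd p q) = x p * y q * (\<integral>\<omega>. indicator (Ap p) \<omega> * indicator (Ap q) \<omega> \<partial>M)"
      by (simp add: cc_nd)
  qed
  also have "\<dots> = (\<integral>\<omega>. (\<Sum>p<N. \<Sum>q<N. x p * y q * (indicator (Ap p) \<omega> * indicator (Ap q) \<omega>)) \<partial>M)"
  proof -
    have i: "integrable M (\<lambda>\<omega>. x p * y q * (indicator (Ap p) \<omega> * indicator (Ap q) \<omega> :: real))" for p q
      by (intro integrable_mult_right ind_integrable)
    have "(\<integral>\<omega>. (\<Sum>p<N. \<Sum>q<N. x p * y q * (indicator (Ap p) \<omega> * indicator (Ap q) \<omega>)) \<partial>M)
      = (\<Sum>p<N. (\<integral>\<omega>. (\<Sum>q<N. x p * y q * (indicator (Ap p) \<omega> * indicator (Ap q) \<omega>)) \<partial>M))"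
      by (rule Bochner_Integration.integral_sum) (rule Bochner_Integration.integrable_sum, rule i)
    also have "\<dots> = (\<Sum>p<N. \<Sum>q<N. (\<integral>\<omega>. x p * y q * (indicator (Ap p) \<omega> * indicator (Ap q) \<omega>) \<partial>M))"
      by (intro sum.cong refl Bochner_Integration.integral_sum i)
    also have "\<dots> = (\<Sum>p<N. \<Sum>q<N. x p * y q * (\<integral>\<omega>. indicator (Ap p) \<omega> * indicator (Ap q) \<omega> \<partial>M))"
      by (intro sum.cong refl integral_mult_right_zero)
    finally show ?thesis by simp
  qed
  also have "\<dots> = (\<integral>\<omega>. (\<Sum>p<N. x p * indicator (Ap p) \<omega>) * (\<Sum>q<N. y q * indicator (Ap q) \<omega>) \<partial>M)"
    by (intro Bochner_Integration.integral_cong refl) (simp only: sum_product mult_ac)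
  finally show ?thesis .
qed

lemma cc_psd: "0 \<le> QF cc N x x"
  unfolding QF_cc_integral by (rule Bochner_Integration.integral_nonneg) simp

lemma cc_fej: "measure M A ^ 2 * real N ^ 2 \<le> QF cc N (\<lambda>_. 1) (\<lambda>_. 1)"
proof -
  interpret prob_space M by (rule P)
  define g where "g = (\<lambda>\<omega>. \<Sum>p<N. indicator (Ap p) \<omega> :: real)"
  have Q: "QF cc N (\<lambda>_. 1) (\<lambda>_. 1) = (\<integral>\<omega>. g \<omega> * g \<omega> \<partial>M)"
    unfolding QF_cc_integral g_def by simp
  have ii: "integrable M (indicator (Ap p) :: _ \<Rightarrow> real)" for p
    using Ap_sets[of p] emeasure_finite[of "Ap p"] by (simp add: integrable_indicator_iff sets.Int_space_eq2 less_top[symmetric])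
  have gi: "integrable M g" unfolding g_def by (rule Bochner_Integration.integrable_sum) (rule ii)
  have ggi: "integrable M (\<lambda>\<omega>. g \<omega> * g \<omega>)"
  proof -
    have "(\<lambda>\<omega>. g \<omega> * g \<omega>) = (\<lambda>\<omega>. \<Sum>p<N. \<Sum>q<N. indicator (Ap p) \<omega> * indicator (Ap q) \<omega> :: real)"
      unfolding g_def by (simp only: sum_product)
    thus ?thesis by (simp only:) (intro Bochner_Integration.integrable_sum ind_integrable)
  qed
  have gm: "(\<integral>\<omega>. g \<omega> \<partial>M) = real N * measure M A"
  proof -
    have "(\<integral>\<omega>. g \<omega> \<partial>M) = (\<Sum>p<N. (\<integral>\<omega>. indicator (Ap p) \<omega> \<partial>M))"
      unfolding g_def by (rule Bochner_Integration.integral_sum) (rule ii)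
    also have "\<dots> = (\<Sum>p<N. measure M A)"
    proof (intro sum.cong refl)
      fix p
      have "(\<integral>\<omega>. indicator (Ap p) \<omega> \<partial>M) = measure M (Ap p)"
        using Ap_sets[of p] by (simp add: sets.Int_space_eq2)
      also have "\<dots> = measure M A" unfolding Ap_def by (rule Tn_pres[OF Am])
      finally show "(\<integral>\<omega>. indicator (Ap p) \<omega> \<partial>M) = measure M A" .
    qed
    finally show ?thesis by simp
  qed
  define m where "m = (\<integral>\<omega>. g \<omega> \<partial>M)"
  have "0 \<le> (\<integral>\<omega>. (g \<omega> - m) * (g \<omega> - m) \<partial>M)"
    by (rule Bochner_Integration.integral_nonneg) simp
  also have "(\<integral>\<omega>. (g \<omega> - m) * (g \<omega> - m) \<partial>M) = (\<integral>\<omega>. g \<omega> * g \<omega> - (2 * m) * g \<omega> + m * m \<partial>M)"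
    by (intro Bochner_Integration.integral_cong refl) (simp add: algebra_simps)
  also have "\<dots> = (\<integral>\<omega>. g \<omega> * g \<omega> \<partial>M) - (2 * m) * m + m * m"
    using ggi gi by (simp add: m_def prob_space)
  finally have "m * m \<le> (\<integral>\<omega>. g \<omega> * g \<omega> \<partial>M)" by simp
  thus ?thesis unfolding Q using gm by (simp add: m_def power2_eq_square algebra_simps)
qed

end



lemma shift_pow: "(Defs.shift ^^ n) \<omega> = (\<lambda>j. \<omega> (j + n))"
  by (induction n arbitrary: \<omega>) (simp_all add: Defs.shift_def)

lemma open_coord: "open {\<omega> :: nat \<Rightarrow> bool. \<omega> i}"
proof -
  have "open ((\<lambda>\<omega> :: nat \<Rightarrow> bool. \<omega> i) -` {True} \<inter> UNIV)"
    using continuous_on_open_vimage[of UNIV "\<lambda>\<omega> :: nat \<Rightarrow> bool. \<omega> i"]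
    by (simp add: discrete_topology_class.open_discrete)
  moreover have "(\<lambda>\<omega> :: nat \<Rightarrow> bool. \<omega> i) -` {True} \<inter> UNIV = {\<omega>. \<omega> i}" by auto
  ultimately show ?thesis by simp
qed

definition Bs :: "nat \<Rightarrow> (nat \<Rightarrow> bool) set" where "Bs i = {\<omega>. \<omega> 0 \<and> \<omega> i}"

lemma Bs_open: "open (Bs i)"
proof -
  have "Bs i = {\<omega>. \<omega> 0} \<inter> {\<omega>. \<omega> i}" by (auto simp: Bs_def)
  thus ?thesis using open_coord[of 0] open_coord[of i] by auto
qed

lemma Bs_cont: "continuous_on X (\<lambda>\<omega>. indicator (Bs i) \<omega> :: real)"
proof -
  let ?h = "\<lambda>b::bool. if b then 1 else (0::real)"
  have c: "continuous_on UNIV (\<lambda>\<omega> :: nat \<Rightarrow> bool. ?h (\<omega> j))" for j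
    using continuous_on_compose[OF continuous_on_product_coordinates[of j], of ?h]
    by (simp add: comp_def)
  have "continuous_on UNIV (\<lambda>\<omega> :: nat \<Rightarrow> bool. ?h (\<omega> 0) * ?h (\<omega> i))"
    by (intro continuous_on_mult c)
  moreover have "(\<lambda>\<omega>. indicator (Bs i) \<omega> :: real) = (\<lambda>\<omega> :: nat \<Rightarrow> bool. ?h (\<omega> 0) * ?h (\<omega> i))"
    by (auto simp: Bs_def indicator_def)
  ultimately show ?thesis by (metis continuous_on_subset subset_UNIV)
qed

lemma card_S_sum: "real (card (S \<inter> {1..N})) = (\<Sum>n<N. if Suc n \<in> S then 1 else (0::real))"
proof -
  have "S \<inter> {1..N} = Suc ` {n\<in>{..<N}. Suc n \<in> S}"
    by (auto simp: image_iff) (metis Suc_le_eq Suc_pred le_simps(3) le_zero_eq not_less_eq_eq)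
  hence "card (S \<inter> {1..N}) = card {n\<in>{..<N}. Suc n \<in> S}" by (simp add: card_image)
  moreover have "(\<Sum>n<N. if Suc n \<in> S then 1 else (0::real)) = real (card {n\<in>{..<N}. Suc n \<in> S})"
    by (simp add: sum.If_cases Int_def)
  ultimately show ?thesis by simp
qed

lemma WM_extract:
  assumes "WM_set S" and s_def: "s = (\<lambda>n. if Suc n \<in> S then 1 else (0::real))"
  shows "\<exists>d \<beta>. d > 0 \<and> (\<lambda>N. (\<Sum>n<N. s n) / real N) \<longlonglongrightarrow> d
     \<and> (\<forall>k. (\<lambda>N. (\<Sum>n<N. s n * s (n+k)) / real N) \<longlonglongrightarrow> \<beta> k)
     \<and> (\<lambda>H. (\<Sum>k<H. \<bar>\<beta> k - d^2\<bar>) / real H) \<longlonglongrightarrow> 0"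
proof -
  define \<xi> where "\<xi> = indic_pt S"
  define X where "X = orbit_closure \<xi>"
  from assms obtain \<mu> d where inv: "invariant_borel_prob X \<mu>" and gen: "generic_point X \<mu> \<xi>"
    and wmx: "weakly_mixing \<mu> Defs.shift" and dpos: "d > 0" and hd: "has_density S d"
    unfolding WM_set_def X_def \<xi>_def by blast
  have P: "prob_space \<mu>" and sb: "sets \<mu> = sets borel" and X1: "emeasure \<mu> X = 1"
    using inv unfolding invariant_borel_prob_def by auto
  interpret prob_space \<mu> by (rule P)
  have sp: "space \<mu> = UNIV" using sets_eq_imp_space_eq[OF sb] by simp
  have Xs: "X \<in> sets \<mu>" unfolding sb X_def orbit_closure_def by (rule borel_closed) simp
  have Bsm: "Bs i \<in> sets \<mu>" for i unfolding sb by (rule borel_open[OF Bs_open])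
  have AEX: "AE x in \<mu>. x \<in> X" using X1 by (intro AE_prob_1) (simp add: measure_def)
  have mB: "(LINT x:X|\<mu>. indicator (Bs i) x) = measure \<mu> (Bs i)" for i
  proof -
    have "(LINT x:X|\<mu>. indicator (Bs i) x) = (\<integral>x. indicator (X \<inter> Bs i) x \<partial>\<mu>)"
      unfolding set_lebesgue_integral_def by (intro Bochner_Integration.integral_cong refl) (auto simp: indicator_def)
    also have "\<dots> = measure \<mu> (X \<inter> Bs i)" by (simp add: sp)
    also have "\<dots> = measure \<mu> (Bs i)"
      by (rule measure_eq_AE) (use AEX Xs Bsm in auto)
    finally show ?thesis .
  qed
  have pt: "indicator (Bs i) ((Defs.shift ^^ n) \<xi>) = s n * s (n + i)" for i n
    by (simp add: shift_pow \<xi>_def indic_pt_def Bs_def s_def indicator_def add.commute)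
  have lim: "(\<lambda>N. (\<Sum>n<N. s n * s (n + i)) / real N) \<longlonglongrightarrow> measure \<mu> (Bs i)" for i
  proof -
    have "(\<lambda>N. (\<Sum>n<N. indicator (Bs i) ((Defs.shift ^^ n) \<xi>)) / real N) \<longlonglongrightarrow> (LINT x:X|\<mu>. indicator (Bs i) x)"
      using gen Bs_cont[of X i] unfolding generic_point_def by blast
    thus ?thesis unfolding mB pt .
  qed
  have sd0: "(\<lambda>N. (\<Sum>n<N. s n) / real N) \<longlonglongrightarrow> measure \<mu> (Bs 0)"
  proof -
    have "(\<lambda>n. s n * s (n + 0)) = s" by (auto simp: s_def)
    thus ?thesis using lim[of 0] by (simp only:)
  qed
  have sd: "(\<lambda>N. (\<Sum>n<N. s n) / real N) \<longlonglongrightarrow> d"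
    using hd unfolding has_density_def card_S_sum s_def .
  have dB: "measure \<mu> (Bs 0) = d" using LIMSEQ_unique[OF sd0 sd] .
  have wm: "(\<lambda>H. (\<Sum>k<H. \<bar>measure \<mu> (Bs k) - d^2\<bar>) / real H) \<longlonglongrightarrow> 0"
  proof -
    have "Bs 0 \<in> sets \<mu>" by (rule Bsm)
    with wmx have "(\<lambda>N. (\<Sum>n<N. \<bar>measure \<mu> (Bs 0 \<inter> ((Defs.shift ^^ n) -` Bs 0 \<inter> space \<mu>)) - measure \<mu> (Bs 0) * measure \<mu> (Bs 0)\<bar>) / real N) \<longlonglongrightarrow> 0"
      unfolding weakly_mixing_def by blast
    moreover have "Bs 0 \<inter> ((Defs.shift ^^ n) -` Bs 0 \<inter> space \<mu>) = Bs n" for n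
      by (auto simp: Bs_def shift_pow sp)
    ultimately show ?thesis by (simp add: dB power2_eq_square)
  qed
  show ?thesis
    by (rule exI[of _ d], rule exI[of _ "\<lambda>k. measure \<mu> (Bs k)"]) (insert dpos sd lim wm, auto)
qed




lemma sum_indic_card: "finite I \<Longrightarrow> (\<Sum>x\<in>I. if x \<in> E then 1 else (0::real)) = real (card (E \<inter> I))"
  by (simp add: sum.If_cases Int_commute)

lemma ubd_intervals:
  fixes E :: "nat set"
  assumes "upper_banach_density E > 0"
  shows "\<exists>\<delta>0 P l. \<delta>0 > 0 \<and> (\<forall>j. l j > (j::nat)) \<and>
     (\<forall>j. \<delta>0 * real (l j) \<le> (\<Sum>x\<in>{P j..<P j + l j}. if x \<in> E then 1 else (0::real)))"
proof -
  from assms obtain a b :: "nat \<Rightarrow> nat" where ab: "\<forall>n. a n \<le> b n"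
    and fl: "filterlim (\<lambda>n. b n - a n) at_top sequentially"
    and lp: "0 < limsup (\<lambda>n. ereal (real (card (E \<inter> {a n..b n})) / real (b n - a n + 1)))"
    unfolding upper_banach_density_def less_Sup_iff by blast
  define f where "f n = ereal (real (card (E \<inter> {a n..b n})) / real (b n - a n + 1))" for n
  obtain z where z0: "0 < ereal z" and zl: "ereal z < limsup f"
    using ereal_dense2[OF lp] unfolding f_def by blast
  have fr: "\<exists>m\<ge>n. ereal z < f m" for n
  proof -
    have "ereal z < (SUP m\<in>{n..}. f m)"
      using zl unfolding limsup_INF_SUP by (meson UNIV_I less_INF_D)
    thus ?thesis by (auto simp: less_SUP_iff)
  qed
  have "\<exists>m. Suc j \<le> b m - a m \<and> ereal z < f m" for j
  proof -
    from fl have "eventually (\<lambda>n. Suc j \<le> b n - a n) sequentially"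
      by (simp add: filterlim_at_top)
    then obtain N where N: "\<And>n. n \<ge> N \<Longrightarrow> Suc j \<le> b n - a n" by (auto simp: eventually_sequentially)
    obtain m where "m \<ge> N" "ereal z < f m" using fr[of N] by blast
    thus ?thesis using N by blast
  qed
  then obtain g where g: "\<And>j. Suc j \<le> b (g j) - a (g j) \<and> ereal z < f (g j)" by metis
  define P where "P j = a (g j)" for j
  define l where "l j = b (g j) - a (g j) + 1" for j
  have lj: "l j > j" for j using g[of j] by (simp add: l_def)
  have dj: "z * real (l j) \<le> (\<Sum>x\<in>{P j..<P j + l j}. if x \<in> E then 1 else (0::real))" for j
  proof -
    have iv: "{P j..<P j + l j} = {a (g j)..b (g j)}" using ab[rule_format, of "g j"] by (auto simp: P_def l_def)
    have "z < real (card (E \<inter> {a (g j)..b (g j)})) / real (l j)"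
      using g[of j] by (simp add: f_def l_def)
    hence "z * real (l j) < real (card (E \<inter> {a (g j)..b (g j)}))"
      using lj[of j] by (simp add: pos_less_divide_eq)
    thus ?thesis unfolding iv by (simp add: sum_indic_card)
  qed
  show ?thesis using z0 lj dj by (intro exI[of _ z] exI[of _ P] exI[of _ l]) auto
qed


theorem mainTheorem6:
  fixes S :: "nat set"
  assumes "WM_set S"
  shows "(\<forall>E. E \<subseteq> {1..} \<and> upper_banach_density E > 0 \<longrightarrow>
             (\<exists>s\<in>S. \<exists>m\<in>E. m + s \<in> E))
       \<and> (\<forall>(M :: 'a measure) T. prob_space M \<and> T \<in> measurable M M \<and> distr M M T = M \<longrightarrow>
             (\<forall>A\<in>sets M. measure M A > 0 \<longrightarrow>
                (\<exists>s\<in>S. measure M (A \<inter> ((T ^^ s) -` A \<inter> space M)) > 0)))"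
proof -
  define s where "s = (\<lambda>n. if Suc n \<in> S then 1 else (0::real))"
  obtain d \<beta> where dpos: "d > 0" and sd: "(\<lambda>N. (\<Sum>n<N. s n) / real N) \<longlonglongrightarrow> d"
    and sb: "\<And>k. (\<lambda>N. (\<Sum>n<N. s n * s (n+k)) / real N) \<longlonglongrightarrow> \<beta> k"
    and wm: "(\<lambda>H. (\<Sum>k<H. \<bar>\<beta> k - d^2\<bar>) / real H) \<longlonglongrightarrow> 0"
    using WM_extract[OF assms s_def] by blast
  have s01: "s n = 0 \<or> s n = 1" for n by (simp add: s_def)
  have s1: "s n = 1 \<Longrightarrow> Suc n \<in> S" for n by (simp add: s_def split: if_splits)
  have part1: "\<exists>s\<in>S. \<exists>m\<in>E. m + s \<in> E" if ubd: "upper_banach_density E > 0" for E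
  proof -
    obtain \<delta>0 P l where d0: "\<delta>0 > 0" and lj: "\<And>j. l j > (j::nat)"
      and dj: "\<And>j. \<delta>0 * real (l j) \<le> (\<Sum>x\<in>{P j..<P j + l j}. if x \<in> E then 1 else (0::real))"
      using ubd_intervals[OF ubd] by blast
    obtain c where cb: "\<And>k. \<bar>c k\<bar> \<le> 1" and psd: "\<And>N x. 0 \<le> QF c N x x"
      and fej: "\<And>N. \<delta>0^2 * real N ^ 2 \<le> QF c N (\<lambda>_. 1) (\<lambda>_. 1)"
      and rec: "\<And>k. c k > 0 \<Longrightarrow> \<exists>m\<in>E. m + k \<in> E"
      using kernel_from_intervals[OF lj dj d0] by blast
    have "\<delta>0^2 > 0" using d0 by simp
    from key_lemma_wm[OF cb psd this fej s01 dpos sd sb wm]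
    obtain n where "s n = 1" "c (Suc n) > 0" by blast
    thus ?thesis using s1 rec by blast
  qed
  have part2: "\<exists>s\<in>S. measure M (A \<inter> ((T ^^ s) -` A \<inter> space M)) > 0"
    if P: "prob_space M" and Tm: "T \<in> measurable M M" and Td: "distr M M T = M"
      and Am: "A \<in> sets M" and Ap: "measure M A > 0" for M :: "'a measure" and T A
  proof -
    have "measure M A ^ 2 > 0" using Ap by simp
    from key_lemma_wm[OF cc_bound[OF P Tm Td Am] cc_psd[OF P Tm Td Am] this cc_fej[OF P Tm Td Am] s01 dpos sd sb wm]
    obtain n where "s n = 1" "cc M T A (Suc n) > 0" by blast
    moreover have "cc M T A (Suc n) = measure M (A \<inter> ((T ^^ Suc n) -` A \<inter> space M))"
      by (rule cc_def[OF P Tm Td Am])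
    ultimately show ?thesis using s1 by force
  qed
  show ?thesis using part1 part2 by blast
qed

end
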